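(* Let $\Bbbk$ be an algebraically closed field of characteristic $2$ and let $\mathfrak{u}(\mathfrak{m})$ be the algebra generated by $a,b,c$ with relations $ab+ba=c$, $ac+ca=a$, $bc+cb=b$, $a^4=b^4=0$, $c^2+c=0$. For every finite-dimensional left $\mathfrak{u}(\mathfrak{m})$-module $V$, the Jordan normal form of the operator by which $a$ acts on $V$ has no Jordan block of size $2$. *)

theory Defs
  imports "HOL-Computational_Algebra.Polynomial" "Jordan_Normal_Form.Jordan_Normal_Form"
begin

definition um_module :: "nat \<Rightarrow> 'a::field mat \<Rightarrow> 'a mat \<Rightarrow> 'a mat \<Rightarrow> bool" where
  "um_module n A B C \<longleftrightarrow>
     A \<in> carrier_mat n n \<and> B \<in> carrier_mat n n \<and> C \<in> carrier_mat n n \<and>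
     A * B + B * A = C \<and>
     A * C + C * A = A \<and>
     B * C + C * B = B \<and>
     A ^\<^sub>m 4 = 0\<^sub>m n n \<and>
     B ^\<^sub>m 4 = 0\<^sub>m n n \<and>
     C * C + C = 0\<^sub>m n n"

end

theory Submission
  imports Defs
begin

definition propJ :: "nat \<Rightarrow> 'a::field mat \<Rightarrow> bool" where
  "propJ n M \<longleftrightarrow> (\<exists>X \<in> carrier_mat n n. M = M * M * X + X * M * M)"

lemma four_block_eq:
  assumes "A \<in> carrier_mat n1 n1" "B \<in> carrier_mat n1 n2" "C \<in> carrier_mat n2 n1" "D \<in> carrier_mat n2 n2"
   "A' \<in> carrier_mat n1 n1" "B' \<in> carrier_mat n1 n2" "C' \<in> carrier_mat n2 n1" "D' \<in> carrier_mat n2 n2"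
   "four_block_mat A B C D = four_block_mat A' B' C' D'"
  shows "A = A'" "D = D'"
proof -
  show "A = A'"
  proof (rule eq_matI)
    fix i j assume ij: "i < dim_row A'" "j < dim_col A'"
    have "four_block_mat A B C D $$ (i,j) = four_block_mat A' B' C' D' $$ (i,j)" using assms(9) by simp
    then show "A $$ (i,j) = A' $$ (i,j)" using assms(1-8) ij by simp
  qed (use assms in auto)
  show "D = D'"
  proof (rule eq_matI)
    fix i j assume ij: "i < dim_row D'" "j < dim_col D'"
    have "four_block_mat A B C D $$ (n1+i,n1+j) = four_block_mat A' B' C' D' $$ (n1+i,n1+j)" using assms(9) by simp
    then show "D $$ (i,j) = D' $$ (i,j)" using assms(1-8) ij by simp
  qed (use assms in auto)
qed

lemma propJ_four_block:
  assumes M1: "M1 \<in> carrier_mat n1 n1" and M2: "M2 \<in> carrier_mat n2 n2"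
    and P: "propJ (n1+n2) (four_block_mat M1 (0\<^sub>m n1 n2) (0\<^sub>m n2 n1) M2)"
  shows "propJ n1 M1" "propJ n2 M2"
proof -
  define M where "M = four_block_mat M1 (0\<^sub>m n1 n2) (0\<^sub>m n2 n1) M2"
  from P obtain X where X: "X \<in> carrier_mat (n1+n2) (n1+n2)"
    and eq: "M = M * M * X + X * M * M"
    unfolding propJ_def M_def by auto
  obtain X1 X2 X3 X4 where sb: "split_block X n1 n1 = (X1,X2,X3,X4)" by (metis prod_cases4)
  note s = split_block[OF sb, of n2 n2]
  have c: "X1 \<in> carrier_mat n1 n1" "X2 \<in> carrier_mat n1 n2" "X3 \<in> carrier_mat n2 n1" "X4 \<in> carrier_mat n2 n2"
    and Xe: "X = four_block_mat X1 X2 X3 X4" using s X by auto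
  have MM: "M * M = four_block_mat (M1*M1) (0\<^sub>m n1 n2) (0\<^sub>m n2 n1) (M2*M2)"
    unfolding M_def
  proof (subst mult_four_block_mat[OF M1 _ _ M2 M1 _ _ M2])
    have a: "M1*M1 \<in> carrier_mat n1 n1" "M2*M2 \<in> carrier_mat n2 n2" using M1 M2 by auto
    show "four_block_mat (M1 * M1 + 0\<^sub>m n1 n2 * 0\<^sub>m n2 n1) (M1 * 0\<^sub>m n1 n2 + 0\<^sub>m n1 n2 * M2)
     (0\<^sub>m n2 n1 * M1 + M2 * 0\<^sub>m n2 n1) (0\<^sub>m n2 n1 * 0\<^sub>m n1 n2 + M2 * M2) =
    four_block_mat (M1 * M1) (0\<^sub>m n1 n2) (0\<^sub>m n2 n1) (M2 * M2)"
      using M1 M2 a by (simp add: right_mult_zero_mat[OF M1] left_mult_zero_mat[OF M2] right_mult_zero_mat[OF M2] left_mult_zero_mat[OF M1])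
  qed auto
  have Mc: "M \<in> carrier_mat (n1+n2) (n1+n2)" unfolding M_def using M1 M2 by auto
  have L: "M * M * X = 
     four_block_mat (M1*M1*X1) (M1*M1*X2) (M2*M2*X3) (M2*M2*X4)"
    unfolding MM Xe using M1 M2 c
    by (subst mult_four_block_mat[of _ n1 n1 _ n2 _ n2], auto simp: mult_carrier_mat)
  have "X * M * M = X * (M * M)" using Mc X by (simp add: assoc_mult_mat[of _ "n1+n2" "n1+n2"])
  also have "\<dots> = four_block_mat (X1*(M1*M1)) (X2*(M2*M2)) (X3*(M1*M1)) (X4*(M2*M2))"
    unfolding MM Xe using M1 M2 c
    by (subst mult_four_block_mat[of _ n1 n1 _ n2 _ n2], auto simp: mult_carrier_mat)
  finally have R: "X * M * M = four_block_mat (X1*(M1*M1)) (X2*(M2*M2)) (X3*(M1*M1)) (X4*(M2*M2))" .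
  have "M * M * X + X * M * M = four_block_mat (M1*M1*X1 + X1*(M1*M1)) (M1*M1*X2 + X2*(M2*M2)) (M2*M2*X3 + X3*(M1*M1)) (M2*M2*X4 + X4*(M2*M2))"
    unfolding L R using M1 M2 c
    by (subst add_four_block_mat[of _ n1 n1 _ n2 _ n2], auto simp: mult_carrier_mat)
  from trans[OF eq this] have "four_block_mat M1 (0\<^sub>m n1 n2) (0\<^sub>m n2 n1) M2 = four_block_mat (M1*M1*X1 + X1*(M1*M1)) (M1*M1*X2 + X2*(M2*M2)) (M2*M2*X3 + X3*(M1*M1)) (M2*M2*X4 + X4*(M2*M2))"
    unfolding M_def .
  note fe = four_block_eq[OF M1 _ _ M2 _ _ _ _ this]
  have e1: "M1 = M1*M1*X1 + X1*(M1*M1)" by (rule fe(1), use M1 M2 c in auto)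
  have e2: "M2 = M2*M2*X4 + X4*(M2*M2)" by (rule fe(2), use M1 M2 c in auto)
  show "propJ n1 M1" unfolding propJ_def using e1 c M1 by (auto simp: assoc_mult_mat[of _ n1 n1])
  show "propJ n2 M2" unfolding propJ_def using e2 c M2 by (auto simp: assoc_mult_mat[of _ n2 n2])
qed

lemma propJ_jordan: "propJ (sum_list (map fst n_as)) (jordan_matrix n_as) \<Longrightarrow> (k,e) \<in> set n_as \<Longrightarrow> propJ k (jordan_block k e)"
proof (induct n_as)
  case Nil thus ?case by simp
next
  case (Cons ne n_as')
  obtain n e' where ne: "ne = (n,e')" by force
  have "jordan_matrix (ne # n_as') = four_block_mat (jordan_block n e') (0\<^sub>m n (sum_list (map fst n_as'))) (0\<^sub>m (sum_list (map fst n_as')) n) (jordan_matrix n_as')"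
    unfolding ne jordan_matrix_def using jordan_matrix_carrier[of n_as'] by (simp add: Let_def jordan_matrix_def)
  with Cons(2) have "propJ (n + sum_list (map fst n_as')) (four_block_mat (jordan_block n e') (0\<^sub>m n (sum_list (map fst n_as'))) (0\<^sub>m (sum_list (map fst n_as')) n) (jordan_matrix n_as'))"
    unfolding ne by simp
  note pf = propJ_four_block[OF jordan_block_carrier jordan_matrix_carrier this]
  show ?case using Cons(1)[OF pf(2)] pf(1) Cons(3) ne by auto
qed

lemma char2_two: "CHAR('a::field) = 2 \<Longrightarrow> (2::'a) = 0"
  by (metis of_nat_CHAR of_nat_numeral)

lemma char2_dbl: "CHAR('a::field) = 2 \<Longrightarrow> (x::'a) + x = 0"
  by (metis char2_two mult_2 mult_zero_left)

lemma not_propJ_block2: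
  assumes "CHAR('a::field) = 2"
  shows "\<not> propJ 2 (jordan_block 2 (e::'a))"
proof
  assume "propJ 2 (jordan_block 2 e)"
  then obtain X where X: "X \<in> carrier_mat 2 2" and eq: "jordan_block 2 e = jordan_block 2 e * jordan_block 2 e * X + X * jordan_block 2 e * jordan_block 2 e"
    unfolding propJ_def by auto
  have "jordan_block 2 e $$ (0,1) = (jordan_block 2 e * jordan_block 2 e * X + X * jordan_block 2 e * jordan_block 2 e) $$ (0,1)"
    using eq by simp
  also have "\<dots> = (e*e*X$$(0,1) + X$$(0,1)*(e*e)) + (e+e)*(X$$(1,1) + X$$(0,0))"
    using X by (simp add: scalar_prod_def eval_nat_numeral algebra_simps)
  also have "\<dots> = 0" using char2_two[OF assms] by (simp add: algebra_simps)
  finally show False by simp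
qed

lemma conj_mult:
  fixes M N P Q :: "'a::field mat"
  assumes c: "M \<in> carrier_mat n n" "N \<in> carrier_mat n n" "P \<in> carrier_mat n n" "Q \<in> carrier_mat n n"
    and PQ: "P * Q = 1\<^sub>m n"
  shows "Q * (M * N) * P = (Q * M * P) * (Q * N * P)"
proof -
  have "(Q * M * P) * (Q * N * P) = Q * (M * (P * Q) * N) * P"
    using c by (simp add: assoc_mult_mat[of _ n n _ n _ n])
  also have "M * (P * Q) = M" using PQ by (simp add: right_mult_one_mat[OF c(1)])
  finally show ?thesis using c by (simp add: assoc_mult_mat[of _ n n _ n _ n])
qed

lemma conj_add:
  fixes M N P Q :: "'a::field mat"
  assumes c: "M \<in> carrier_mat n n" "N \<in> carrier_mat n n" "P \<in> carrier_mat n n" "Q \<in> carrier_mat n n"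
  shows "Q * (M + N) * P = (Q * M * P) + (Q * N * P)"
  using c by (simp add: mult_add_distrib_mat[of _ n n] add_mult_distrib_mat[of _ n n])

lemma key_identity:
  fixes A B C :: "'a::field mat"
  assumes "CHAR('a) = 2" and "um_module n A B C"
  shows "A = A * A * B + B * A * A"
proof -
  from assms(2) have c: "A \<in> carrier_mat n n" "B \<in> carrier_mat n n" "C \<in> carrier_mat n n"
    and r1: "A * B + B * A = C" and r2: "A * C + C * A = A"
    unfolding um_module_def by auto
  have "A = A * (A * B + B * A) + (A * B + B * A) * A" using r1 r2 by simp
  also have "\<dots> = A * (A * B) + A * (B * A) + (A * (B * A) + B * (A * A))"
  proof -
    have cc: "A * B \<in> carrier_mat n n" "B * A \<in> carrier_mat n n" using c by auto
    show ?thesis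
      using c cc by (simp add: mult_add_distrib_mat[OF c(1) cc] add_mult_distrib_mat[OF cc c(1)])
  qed
  also have "\<dots> = A * (A * B) + B * (A * A)"
  proof (rule eq_matI)
    fix i j assume ij: "i < dim_row (A * (A * B) + B * (A * A))" "j < dim_col (A * (A * B) + B * (A * A))"
    then have ij': "i < n" "j < n" using c by auto
    have d: "(A * (B * A)) $$ (i,j) + (A * (B * A)) $$ (i,j) = 0" by (rule char2_dbl[OF assms(1)])
    show "(A * (A * B) + A * (B * A) + (A * (B * A) + B * (A * A))) $$ (i, j) = (A * (A * B) + B * (A * A)) $$ (i, j)"
      using ij' c d by (simp add: algebra_simps)
  qed (use c in auto)
  also have "\<dots> = A * A * B + B * A * A" using c by simp
  finally show ?thesis .
qed

theorem lemma3p5: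
  fixes A B C :: "'a::alg_closed_field mat" and n :: nat
  assumes "CHAR('a) = 2"
    and "um_module n A B C"
    and "jordan_nf A n_as"
  shows "\<forall>(k, ev) \<in> set n_as. k \<noteq> 2"
proof -
  have key: "A = A * A * B + B * A * A" by (rule key_identity[OF assms(1,2)])
  from assms(2) have cA: "A \<in> carrier_mat n n" and cB: "B \<in> carrier_mat n n"
    unfolding um_module_def by auto
  let ?J = "jordan_matrix n_as"
  from assms(3) obtain P Q where wit: "similar_mat_wit A ?J P Q"
    unfolding jordan_nf_def similar_mat_def by auto
  from similar_mat_witD2[OF cA wit] have PQ: "P * Q = 1\<^sub>m n" and QP: "Q * P = 1\<^sub>m n"
    and AJ: "A = P * ?J * Q" and cJ: "?J \<in> carrier_mat n n" and cP: "P \<in> carrier_mat n n"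
    and cQ: "Q \<in> carrier_mat n n" by auto
  have nsum: "sum_list (map fst n_as) = n" using cJ by auto
  have J: "?J = Q * A * P"
  proof -
    have "Q * A * P = (Q * P) * ?J * (Q * P)" unfolding AJ using cJ cP cQ
      by (simp add: assoc_mult_mat[of _ n n _ n _ n])
    then show ?thesis using QP cJ by (simp add: left_mult_one_mat right_mult_one_mat)
  qed
  define X where "X = Q * B * P"
  have cX: "X \<in> carrier_mat n n" unfolding X_def using cB cP cQ by auto
  have "Q * A * P = Q * (A * A * B + B * A * A) * P" using key by simp
  also have "\<dots> = ?J * ?J * X + X * ?J * ?J"
  proof -
    have c2: "A * A \<in> carrier_mat n n" "A * A * B \<in> carrier_mat n n" "B * A \<in> carrier_mat n n"
      "B * A * A \<in> carrier_mat n n" using cA cB by auto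
    have e1: "Q * (A * A * B + B * A * A) * P = Q * (A * A * B) * P + Q * (B * A * A) * P"
      by (rule conj_add[OF c2(2,4) cP cQ])
    have e2: "Q * (A * A * B) * P = (Q * A * P) * (Q * A * P) * (Q * B * P)"
      using conj_mult[OF c2(1) cB cP cQ PQ] conj_mult[OF cA cA cP cQ PQ] by simp
    have e3: "Q * (B * A * A) * P = (Q * B * P) * (Q * A * P) * (Q * A * P)"
      using conj_mult[OF c2(3) cA cP cQ PQ] conj_mult[OF cB cA cP cQ PQ] by simp
    show ?thesis unfolding e1 e2 e3 J X_def ..
  qed
  finally have "propJ n ?J" unfolding propJ_def using cX J by auto
  then have pj: "propJ (sum_list (map fst n_as)) ?J" using nsum by simp
  show ?thesis
  proof (intro ballI, clarify)
    fix ev assume "(2, ev) \<in> set n_as"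
    from propJ_jordan[OF pj this] not_propJ_block2[OF assms(1)] show False by auto
  qed
qed

end
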